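(* Let $n \geq 2$ and let $\mathbb{F}_q$ be a finite field. The special unit-digraph on $\operatorname{Mat}_n(\mathbb{F}_q)$ is connected and has diameter $2$. It can be regarded as a simple undirected regular graph (i.e. its connection set $\operatorname{SL}_n(\mathbb{F}_q)$ satisfies $-\operatorname{SL}_n(\mathbb{F}_q)=\operatorname{SL}_n(\mathbb{F}_q)$) if and only if $n$ is even or $\operatorname{char}(\mathbb{F}_q) = 2$. Its adjacency matrix has at most $n+q-1$ distinct eigenvalues.
   Context: The special unit-digraph on $\operatorname{Mat}_n(\mathbb{F}_q)$ is the Cayley digraph $\operatorname{Cay}(\operatorname{Mat}_n(\mathbb{F}_q), \operatorname{SL}_n(\mathbb{F}_q))$: vertex set $\operatorname{Mat}_n(\mathbb{F}_q)$, with a directed edge from $A$ to $B$ iff $\det(B - A) = 1$. *)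

theory Defs
  imports "HOL-Analysis.Analysis"
begin

text \<open>Matrices Mat_n(F_q) are rendered as 'a^'n^'n with 'a a finite field and n = CARD('n).\<close>

definition SL :: "('a::comm_ring_1 ^'n::finite^'n) set" where
  "SL = {M. det M = 1}"

text \<open>Edge relation of the special unit-digraph Cay(Mat_n(F_q), SL_n(F_q)): A \<rightarrow> B iff det(B - A) = 1.\<close>
definition sud_edges :: "(('a::comm_ring_1 ^'n::finite^'n) \<times> ('a^'n^'n)) set" where
  "sud_edges = {(A, B). det (B - A) = 1}"

text \<open>Directed distance: least length of a directed walk from A to B.\<close>
definition sud_dist :: "('a::comm_ring_1 ^'n::finite^'n) \<Rightarrow> ('a^'n^'n) \<Rightarrow> nat" where
  "sud_dist A B = (LEAST k. (A, B) \<in> sud_edges ^^ k)"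

definition sud_strongly_connected :: "'a::comm_ring_1 itself \<Rightarrow> 'n::finite itself \<Rightarrow> bool" where
  "sud_strongly_connected _ _ \<longleftrightarrow> (\<forall>A B :: 'a^'n^'n. (A, B) \<in> sud_edges\<^sup>*)"

definition sud_diameter :: "'a::{comm_ring_1,finite} itself \<Rightarrow> 'n::finite itself \<Rightarrow> nat" where
  "sud_diameter _ _ = Max {sud_dist (A :: 'a^'n^'n) B | A B. True}"

text \<open>Adjacency matrix over the complex numbers, rows/columns indexed by the vertices.\<close>
definition sud_adj :: "complex ^ ('a::{comm_ring_1,finite} ^'n::finite^'n) ^ ('a^'n^'n)" where
  "sud_adj = (\<chi> A B. if (A, B) \<in> sud_edges then 1 else 0)"

definition is_eigenvalue :: "complex ^'m::finite^'m \<Rightarrow> complex \<Rightarrow> bool" where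
  "is_eigenvalue M c \<longleftrightarrow> (\<exists>v. v \<noteq> 0 \<and> M *v v = c *s v)"

end

theory Submission
  imports Defs "HOL-Computational_Algebra.Polynomial" "HOL-Library.Cardinality"
begin


definition rk :: "'n::finite \<Rightarrow> nat" where
  "rk = (SOME f. bij_betw f (UNIV::'n set) {..<CARD('n)})"

lemma rk_bij: "bij_betw (rk::'n::finite \<Rightarrow> nat) UNIV {..<CARD('n)}"
proof -
  have "\<exists>f. bij_betw f (UNIV::'n set) {..<CARD('n)}"
    using ex_bij_betw_finite_nat[of "UNIV::'n set"] by (auto simp: atLeast0LessThan)
  then show ?thesis unfolding rk_def by (rule someI_ex)
qed

lemma rk_inj: "rk i = rk j \<longleftrightarrow> i = j"
  using rk_bij unfolding bij_betw_def inj_on_def by auto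

lemma rk_lt: "rk (i::'n::finite) < CARD('n)"
  using rk_bij unfolding bij_betw_def by auto

lemma rk_surj: "k < CARD('n) \<Longrightarrow> \<exists>i::'n::finite. rk i = k"
  using rk_bij unfolding bij_betw_def by (metis image_iff lessThan_iff)

lemma perm_rank_exists:
  fixes p :: "'n::finite \<Rightarrow> 'n"
  assumes p: "p permutes UNIV" and ne: "p \<noteq> id"
  shows "\<exists>i. rk i < rk (p i)"
proof (rule ccontr)
  assume "\<not> ?thesis"
  then have le: "\<And>i. rk (p i) \<le> rk i" by (simp add: not_less)
  have "sum rk (UNIV::'n set) = sum (rk \<circ> p) UNIV" by (rule sum.permute[OF p])
  then have "(\<Sum>i\<in>UNIV. rk (p i)) = (\<Sum>i\<in>(UNIV::'n set). rk i)"
    by (simp add: comp_def)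
  then have "\<forall>i\<in>UNIV. rk (p i) = rk i"
    using sum_mono_inv[where f="\<lambda>i. rk (p i)" and g=rk and I=UNIV] le by auto
  then have "p = id" by (auto simp: rk_inj fun_eq_iff)
  with ne show False by simp
qed

lemma det_lower_rk:
  fixes A :: "'a::comm_ring_1^'n::finite^'n"
  assumes ld: "\<And>i j. rk i < rk j \<Longrightarrow> A$i$j = 0"
  shows "det A = prod (\<lambda>i. A$i$i) (UNIV:: 'n set)"
proof -
  let ?U = "UNIV:: 'n set"
  let ?PU = "{p. p permutes ?U}"
  let ?pp = "\<lambda>p. of_int (sign p) * prod (\<lambda>i. A$i$p i) (UNIV :: 'n set)"
  have fU: "finite ?U"
    by simp
  have id0: "{id} \<subseteq> ?PU"
    by (auto simp: permutes_id)
  have p0: "\<forall>p \<in> ?PU - {id}. ?pp p = 0"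
  proof
    fix p
    assume "p \<in> ?PU - {id}"
    then obtain i where i: "rk i < rk (p i)"
      using perm_rank_exists by blast
    from ld[OF i] have "\<exists>i \<in> ?U. A$i$p i = 0"
      by blast
    with prod_zero[OF fU] show "?pp p = 0"
      by force
  qed
  from sum.mono_neutral_cong_left[OF finite_permutations[OF fU] id0 p0] show ?thesis
    unfolding det_def by (simp add: sign_id)
qed

lemma det_upper_rk:
  fixes A :: "'a::comm_ring_1^'n::finite^'n"
  assumes ld: "\<And>i j. rk j < rk i \<Longrightarrow> A$i$j = 0"
  shows "det A = prod (\<lambda>i. A$i$i) (UNIV:: 'n set)"
proof -
  have "det (transpose A) = prod (\<lambda>i. transpose A$i$i) (UNIV:: 'n set)"
    by (rule det_lower_rk) (simp add: transpose_def ld)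
  then show ?thesis using det_transpose[of A] by (simp add: transpose_def)
qed

text \<open>Splitting a matrix into lower and upper triangular parts.\<close>
lemma split_tri:
  fixes N :: "'a::comm_ring_1^'n::finite^'n"
  assumes "\<And>i. N$i$i = s i + t i" "prod s UNIV = 1" "prod t UNIV = 1"
  shows "\<exists>S T. det S = 1 \<and> det T = 1 \<and> N = S + T"
proof -
  define S :: "'a^'n^'n" where "S = (\<chi> i j. if rk j < rk i then N$i$j else if i = j then s i else 0)"
  define T :: "'a^'n^'n" where "T = (\<chi> i j. if rk i < rk j then N$i$j else if i = j then t i else 0)"
  have "det S = prod s UNIV"
    by (subst det_lower_rk) (auto simp: S_def)
  moreover have "det T = prod t UNIV"
    by (subst det_upper_rk) (auto simp: T_def)
  moreover have "N = S + T"
    by (auto simp: vec_eq_iff S_def T_def assms(1) rk_inj dest: not_less_iff_gr_or_eq[THEN iffD1])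
  ultimately show ?thesis using assms by (intro exI[of _ S] exI[of _ T]) simp
qed

definition PD :: "('n::finite \<Rightarrow> 'n) \<Rightarrow> ('n \<Rightarrow> 'a::comm_ring_1) \<Rightarrow> 'a^'n^'n" where
  "PD p g = (\<chi> i j. if j = p i then g j else 0)"

definition dg :: "('n::finite \<Rightarrow> 'a::comm_ring_1) \<Rightarrow> 'a^'n^'n" where
  "dg g = (\<chi> i j. if i = j then g i else 0)"

definition EE :: "nat \<Rightarrow> 'a::comm_ring_1^'n::finite^'n" where
  "EE r = (\<chi> i j. if i = j \<and> rk i < r then 1 else 0)"

lemma det_dg: "det (dg g) = prod g UNIV"
  by (subst det_diagonal) (auto simp: dg_def)

lemma det_PD:
  assumes p: "p permutes (UNIV::'n::finite set)"
  shows "det (PD p g :: 'a::comm_ring_1^'n^'n) = of_int (sign p) * prod g UNIV"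
proof -
  have "PD p g = (\<chi> i. dg g $ p i)"
    by (auto simp: vec_eq_iff PD_def dg_def)
  then show ?thesis using det_permute_rows[OF p, of "dg g"] det_dg[of g] by simp
qed

lemma PD_mult: "(PD p g ** X) $ i $ j = g (p i) * X $ (p i) $ j"
  by (simp add: matrix_matrix_mult_def PD_def if_distrib[of "\<lambda>x. x * y" for y] sum.delta' cong: if_cong)

lemma mult_dg: "(X ** dg h) $ i $ j = X $ i $ j * h j"
  by (simp add: matrix_matrix_mult_def dg_def if_distrib[of "\<lambda>x. y * x" for y] sum.delta cong: if_cong)

lemma PD_nth: "PD p g $ i $ j = (if j = p i then g j else 0)"
  by (simp add: PD_def)

lemma EE_nth: "EE r $ i $ j = (if i = j \<and> rk i < r then 1 else 0)"
  by (simp add: EE_def)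

lemma dg_nth: "dg g $ i $ j = (if i = j then g i else 0)"
  by (simp add: dg_def)

lemma sign_sq: "(of_int (sign p) :: 'a::comm_ring_1) * of_int (sign p) = 1"
  by (metis of_int_1 of_int_mult sign_idempotent)

lemma card_rk_lt: "r \<le> CARD('n) \<Longrightarrow> card {i::'n::finite. rk i < r} = r"
proof -
  assume r: "r \<le> CARD('n)"
  have "bij_betw rk {i::'n. rk i < r} {..<r}"
    using rk_bij r unfolding bij_betw_def inj_on_def
    by (auto simp: image_iff intro: order_less_le_trans dest: rk_surj)
  then show ?thesis by (simp add: bij_betw_same_card)
qed

lemma card_rk_ge: "r \<le> CARD('n) \<Longrightarrow> card {i::'n::finite. \<not> rk i < r} = CARD('n) - r"
proof -
  assume r: "r \<le> CARD('n)"
  have "{i::'n. \<not> rk i < r} = UNIV - {i. rk i < r}" by auto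
  then show ?thesis using card_rk_lt[OF r] by (simp add: card_Diff_subset)
qed

lemma prod_if_neg1: "finite A \<Longrightarrow> (\<Prod>i\<in>A. if P i then (1::'a::comm_ring_1) else -1) = (-1) ^ card {i\<in>A. \<not> P i}"
proof (induction A rule: finite_induct)
  case empty then show ?case by simp
next
  case (insert x A)
  have "{i \<in> insert x A. \<not> P i} = (if P x then {i\<in>A. \<not> P i} else insert x {i\<in>A. \<not> P i})" by auto
  with insert show ?case by simp
qed

lemma modsuc: "(a::nat) < m \<Longrightarrow> Suc a mod m = (if Suc a = m then 0 else Suc a)"
  by auto

definition cyc :: "'n::finite \<Rightarrow> 'n" where
  "cyc (i::'n) = (THE j::'n. rk j = (rk i + 1) mod CARD('n))"

lemma rk_cyc: "rk (cyc (i::'n::finite)) = (rk i + 1) mod CARD('n)"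
proof -
  have "(rk i + 1) mod CARD('n) < CARD('n)" by simp
  then obtain j::'n where "rk j = (rk i + 1) mod CARD('n)" using rk_surj by blast
  then have "\<exists>!j::'n. rk j = (rk i + 1) mod CARD('n)" using rk_inj by metis
  then show ?thesis unfolding cyc_def by (rule theI')
qed

lemma cyc_permutes: "cyc permutes (UNIV::'n::finite set)"
proof -
  have "inj (cyc::'n \<Rightarrow> 'n)"
  proof (rule injI)
    fix x y :: 'n assume "cyc x = cyc y"
    then have "(rk x + 1) mod CARD('n) = (rk y + 1) mod CARD('n)" using rk_cyc by metis
    moreover have "rk x < CARD('n)" "rk y < CARD('n)" by (simp_all add: rk_lt)
    ultimately have "rk x = rk y"
      by (auto simp: modsuc split: if_splits)
    then show "x = y" by (simp add: rk_inj)
  qed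
  then have "bij (cyc::'n \<Rightarrow> 'n)" by (simp add: finite_UNIV_inj_surj bij_def)
  then show ?thesis by (rule bij_imp_permutes) simp
qed

lemma cyc_neq: "CARD('n::finite) \<ge> 2 \<Longrightarrow> cyc (i::'n) \<noteq> i"
proof
  assume n: "CARD('n) \<ge> 2" and "cyc i = i"
  then have "(rk i + 1) mod CARD('n) = rk i" using rk_cyc by metis
  moreover have "rk i < CARD('n)" by (simp add: rk_lt)
  ultimately show False using n
    by (auto simp: modsuc split: if_splits)
qed

definition dec :: "'a::comm_ring_1^'n::finite^'n \<Rightarrow> bool" where
  "dec N \<longleftrightarrow> (\<exists>S T. det S = 1 \<and> det T = 1 \<and> N = S + T)"

lemma split_tri_dec:
  fixes N :: "'a::comm_ring_1^'n::finite^'n"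
  assumes "\<And>i. N$i$i = s i + t i" "prod s UNIV = 1" "prod t UNIV = 1"
  shows "dec N"
  using split_tri[OF assms] by (simp add: dec_def)

lemma sign_nz: "(of_int (sign p) :: 'a::field) \<noteq> 0"
  using sign_sq[of p, where 'a='a] by force

lemma rk_ex: "k < CARD('n::finite) \<Longrightarrow> \<exists>i::'n. rk i = k"
  by (rule rk_surj)

lemma Da:
  fixes c :: "'a::field"
  assumes n: "CARD('n::finite) \<ge> 2" and c: "c \<noteq> 0"
  shows "\<exists>N::'a^'n^'n. det N = c \<and> dec N"
proof (cases "(2::'a) = 0")
  case True
  obtain i0::'n where i0: "rk i0 = 0" using rk_ex[of 0] n by auto
  define g where "g = (\<lambda>i::'n. if i = i0 then c * of_int (sign (cyc::'n\<Rightarrow>'n)) else 1)"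
  let ?N = "PD cyc g :: 'a^'n^'n"
  have "prod g UNIV = c * of_int (sign (cyc::'n\<Rightarrow>'n))"
    unfolding g_def by (simp add: prod.delta)
  then have "det ?N = c"
    using det_PD[OF cyc_permutes, of g] sign_sq[of "cyc::'n\<Rightarrow>'n", where 'a='a]
    by (simp add: algebra_simps)
  moreover have "dec ?N"
  proof (rule split_tri_dec[where s="\<lambda>_. 1" and t="\<lambda>_. 1"])
    fix i :: 'n
    show "?N $ i $ i = 1 + 1" using cyc_neq[OF n, of i] True by (simp add: PD_nth one_add_one)
  qed simp_all
  ultimately show ?thesis by blast
next
  case False
  obtain a::'n where a: "rk a = 0" using rk_ex[of 0] n by auto
  obtain b::'n where b: "rk b = 1" using rk_ex[of 1, where 'n='n] n by auto
  have ab: "a \<noteq> b" using a b by auto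
  define g where "g = (\<lambda>i::'n. if i = a then - (c / 2^(CARD('n) - 2)) else if i = b then 1 else (2::'a))"
  let ?t = "Transposition.transpose a b"
  let ?N = "PD ?t g :: 'a^'n^'n"
  have r1: "prod g UNIV = g a * prod g (UNIV - {a})"
    by (rule prod.remove) auto
  have r2: "prod g (UNIV - {a}) = g b * prod g (UNIV - {a} - {b})"
    by (rule prod.remove) (use ab in auto)
  have "UNIV - {a} - {b} = UNIV - {a, b}" by auto
  then have "prod g UNIV = g a * g b * prod g (UNIV - {a, b})"
    using r1 r2 by (simp add: mult.assoc)
  also have "prod g (UNIV - {a, b}) = prod (\<lambda>_. 2) (UNIV - {a, b})"
    by (rule prod.cong) (auto simp: g_def)
  also have "\<dots> = 2 ^ (CARD('n) - 2)"
    using ab by (simp add: card_Diff_subset numeral_2_eq_2)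
  finally have "prod g UNIV = - c"
    using ab False by (simp add: g_def)
  then have "det ?N = c"
    using det_PD[OF permutes_swap_id[of a UNIV b], of g] ab by (simp add: sign_swap_id)
  moreover have "dec ?N"
  proof (rule split_tri_dec[where s="\<lambda>_. 1" and t="\<lambda>i. if i = a \<or> i = b then -1 else 1"])
    fix i :: 'n
    show "?N $ i $ i = 1 + (if i = a \<or> i = b then -1 else 1)"
      using ab by (auto simp: PD_nth g_def one_add_one transpose_eq_iff)
  next
    have "(\<Prod>i\<in>UNIV. if i = a \<or> i = b then -1 else (1::'a)) = (\<Prod>i\<in>UNIV. if \<not> (i = a \<or> i = b) then 1 else -1)"
      by (rule prod.cong) auto
    also have "\<dots> = (-1) ^ card {i\<in>UNIV. \<not> \<not> (i = a \<or> i = b)}"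
      by (rule prod_if_neg1) simp
    also have "{i\<in>UNIV. \<not> \<not> (i = a \<or> i = b)} = {a, b}" by auto
    finally show "(\<Prod>i\<in>UNIV. if i = a \<or> i = b then -1 else (1::'a)) = 1"
      using ab by simp
  qed simp
  ultimately show ?thesis by blast
qed

lemma det_PD1_nz:
  assumes p: "p permutes (UNIV::'n::finite set)"
  shows "det (PD p (\<lambda>_. 1) :: 'a::field^'n^'n) \<noteq> 0"
  using det_PD[OF p, of "\<lambda>_. 1::'a"] sign_nz[of p, where 'a='a] by simp

lemma PD_EE_nth: "(PD p (\<lambda>_. 1) ** EE r) $ i $ j = (if j = p i \<and> rk j < r then 1 else 0)"
  by (auto simp: PD_mult EE_nth)

lemma Db:
  fixes r :: nat
  assumes n: "CARD('n::finite) \<ge> 2" and r1: "1 \<le> r" and rn: "r < CARD('n)"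
  shows "\<exists>(N::'a::field^'n^'n) A B. det A \<noteq> 0 \<and> det B \<noteq> 0 \<and> N = A ** EE r ** B \<and> dec N"
proof (cases "(2::'a) = 0")
  case True
  let ?A = "PD cyc (\<lambda>_. 1) :: 'a^'n^'n"
  have "dec (?A ** EE r ** mat 1)"
  proof (rule split_tri_dec[where s="\<lambda>_. 1" and t="\<lambda>_. 1"])
    fix i :: 'n
    show "(?A ** EE r ** mat 1) $ i $ i = 1 + 1"
      using cyc_neq[OF n, of i] True by (simp add: PD_EE_nth one_add_one)
  qed simp_all
  then show ?thesis using det_PD1_nz[OF cyc_permutes] by (metis det_I one_neq_zero)
next
  case False
  define h where "h = (\<lambda>i::'n. if rk i < r then (2::'a) else 1)"
  have dh: "det (dg h) \<noteq> 0" using False by (simp add: det_dg h_def)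
  show ?thesis
  proof (cases "even (CARD('n) - r)")
    case True
    have "dec (mat 1 ** EE r ** dg h)"
    proof (rule split_tri_dec[where s="\<lambda>_. 1" and t="\<lambda>i. if rk i < r then 1 else -1"])
      fix i :: 'n
      show "(mat 1 ** EE r ** dg h) $ i $ i = 1 + (if rk i < r then 1 else -1)"
        by (simp add: mult_dg EE_nth h_def one_add_one)
    next
      have "(\<Prod>i\<in>(UNIV::'n set). if rk i < r then 1 else -1) = ((-1::'a) ^ card {i\<in>(UNIV::'n set). \<not> rk i < r})"
        by (rule prod_if_neg1) simp
      also have "card {i\<in>(UNIV::'n set). \<not> rk i < r} = CARD('n) - r"
        using card_rk_ge[of r, where 'n='n] rn by simp
      finally show "(\<Prod>i\<in>(UNIV::'n set). if rk i < r then 1 else -1) = (1::'a)"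
        using True by simp
    qed simp
    then show ?thesis using dh by (metis det_I one_neq_zero)
  next
    case odd: False
    obtain a::'n where a: "rk a = CARD('n) - 1" using rk_ex[of "CARD('n) - 1", where 'n='n] n by auto
    obtain b::'n where b: "rk b = 0" using rk_ex[of 0, where 'n='n] n by auto
    have ab: "a \<noteq> b" using a b n by auto
    let ?t = "Transposition.transpose a b"
    let ?A = "PD ?t (\<lambda>_. 1) :: 'a^'n^'n"
    have "dec (?A ** EE r ** dg h)"
    proof (rule split_tri_dec[where s="\<lambda>_. 1" and t="\<lambda>i. if \<not> (i = b \<or> \<not> rk i < r) then 1 else -1"])
      fix i :: 'n
      show "(?A ** EE r ** dg h) $ i $ i = 1 + (if \<not> (i = b \<or> \<not> rk i < r) then 1 else -1)"
        using ab a b rn by (auto simp: mult_dg PD_EE_nth h_def one_add_one Transposition.transpose_def split: if_splits)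
    next
      have "(\<Prod>i\<in>(UNIV::'n set). if \<not> (i = b \<or> \<not> rk i < r) then 1 else -1) = ((-1::'a) ^ card {i\<in>(UNIV::'n set). \<not> \<not> (i = b \<or> \<not> rk i < r)})"
        by (rule prod_if_neg1) simp
      also have "{i\<in>(UNIV::'n set). \<not> \<not> (i = b \<or> \<not> rk i < r)} = insert b {i. \<not> rk i < r}" by auto
      also have "card (insert b {i::'n. \<not> rk i < r}) = Suc (CARD('n) - r)"
        using card_rk_ge[of r, where 'n='n] rn b r1 by simp
      finally show "(\<Prod>i\<in>(UNIV::'n set). if \<not> (i = b \<or> \<not> rk i < r) then 1 else -1) = (1::'a)"
        using odd by simp
    qed simp
    then show ?thesis using dh det_PD1_nz[OF permutes_swap_id[of a UNIV b]] by blast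
  qed
qed



lemma mv_axis: "(A::'a::comm_ring_1^'n::finite^'m) *v axis i 1 = (\<chi> k. A $ k $ i)"
  by (simp add: vec_eq_iff matrix_vector_mult_def axis_def if_distrib[of "\<lambda>x. y * x" for y] sum.delta' cong: if_cong)

lemma det_nz_of_spanning:
  fixes A :: "'a::field^'n::finite^'n"
  assumes "vec.span S = UNIV" "S \<subseteq> range (\<lambda>i. (\<chi> k. A $ k $ i))"
  shows "det A \<noteq> 0"
proof -
  have "S \<subseteq> range ((*v) A)"
    using assms(2) by (auto simp: mv_axis[symmetric])
  then have "vec.span S \<subseteq> vec.span (range ((*v) A))" by (rule vec.span_mono)
  also have "vec.span (range ((*v) A)) = range ((*v) A)"
    using vec.span_image[of A UNIV] by simp
  finally have "surj ((*v) A)" using assms(1) by auto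
  then have "\<exists>B. A ** B = mat 1" using matrix_right_invertible_surjective by blast
  then show ?thesis using invertible_right_inverse invertible_det_nz by blast
qed

lemma EE_dg: "EE r = dg (\<lambda>j. if rk j < r then 1 else 0)"
  by (simp add: vec_eq_iff EE_def dg_def)

lemma normal_form:
  fixes M :: "'a::field^'n::finite^'n"
  shows "\<exists>P Q r. det P \<noteq> 0 \<and> det Q \<noteq> 0 \<and> r \<le> CARD('n) \<and> M = P ** EE r ** Q"
proof -
  let ?f = "(*v) M"
  have lin: "Vector_Spaces.linear (*s) (*s) ?f" by simp
  obtain Y where Y: "Y \<subseteq> range ?f" "vec.independent Y" "range ?f \<subseteq> vec.span Y" "card Y = vec.dim (range ?f)"
    using vec.basis_exists by blast
  have fY: "finite Y" using Y(2) vec.finiteI_independent by auto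
  define g where "g y = (SOME x. M *v x = y)" for y
  have g: "M *v g y = y" if "y \<in> Y" for y
  proof -
    from that Y(1) obtain x where "M *v x = y" by auto
    then show ?thesis unfolding g_def by (rule someI)
  qed
  define X where "X = g ` Y"
  have ginj: "inj_on g Y" by (rule inj_onI) (metis g)
  have fX: "?f ` X = Y" unfolding X_def using g by (force simp: image_comp)
  have cX: "card X = card Y" unfolding X_def using ginj by (simp add: card_image)
  have fX': "finite X" unfolding X_def using fY by simp
  define K where "K = {v. M *v v = 0}"
  have sK: "vec.subspace K"
    unfolding K_def vec.subspace_def by (simp add: matrix_vector_right_distrib vec.scale)
  obtain BK where BK: "BK \<subseteq> K" "vec.independent BK" "K \<subseteq> vec.span BK" "card BK = vec.dim K"
    using vec.basis_exists by blast
  have fBK: "finite BK" using BK(2) vec.finiteI_independent by auto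
  have injX: "inj_on ?f X"
    unfolding X_def using g by (auto simp: inj_on_def)
  have injS: "inj_on ?f (vec.span X)"
    using vec.linear_inj_on_span_independent_image[OF lin _ injX] fX Y(2) by simp
  have int0: "vec.span X \<inter> K = {0}"
  proof safe
    fix v assume "v \<in> vec.span X" "v \<in> K"
    then have "?f v = ?f 0" by (simp add: K_def)
    then show "v = 0" using injS \<open>v \<in> vec.span X\<close> vec.span_zero by (meson inj_onD)
  qed (auto simp: K_def vec.span_zero)
  have sumU: "{x + y |x y. x \<in> vec.span X \<and> y \<in> K} = UNIV"
  proof -
   { fix v
    have "?f v \<in> vec.span Y" using Y(3) by auto
    also have "vec.span Y = ?f ` vec.span X" using fX vec.span_image[of M X] by simp
    finally obtain u where u: "u \<in> vec.span X" "?f u = ?f v" by auto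
    have "v - u \<in> K" using u by (simp add: K_def matrix_vector_mult_diff_distrib)
    have "v \<in> {x + y |x y. x \<in> vec.span X \<and> y \<in> K}"
      using u(1) \<open>v - u \<in> K\<close> by (intro CollectI) (rule exI[of _ u], rule exI[of _ "v - u"], simp) }
    then show ?thesis by blast
  qed
  have "vec.dim {x + y |x y. x \<in> vec.span X \<and> y \<in> K} + vec.dim (vec.span X \<inter> K) = vec.dim (vec.span X) + vec.dim K"
    by (rule vec.dim_sums_Int[OF vec.subspace_span sK])
  moreover have "vec.dim ({0}::('a^'n) set) = 0"
    using vec.dim_insert[of 0 "{}"] by (simp add: vec.span_zero)
  ultimately have dimeq: "CARD('n) = vec.dim (vec.span X) + vec.dim K"
    using sumU int0 by (simp add: card_cart_basis)
  have "vec.dim (vec.span X) \<le> card X"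
    using vec.dim_le_card[of "vec.span X" X] fX' by simp
  moreover have "card X \<le> vec.dim (vec.span X)"
  proof -
    have "card X = vec.dim (vec.span Y)" using cX Y(2) by (simp add: vec.dim_eq_card_independent)
    also have "vec.span Y = ?f ` vec.span X" using fX vec.span_image[of M X] by simp
    also have "vec.dim (?f ` vec.span X) \<le> vec.dim (vec.span X)"
      by (rule vec.dim_image_le[OF lin])
    finally show ?thesis .
  qed
  ultimately have dX: "vec.dim (vec.span X) = card X" by simp
  define r where "r = card X"
  have rn: "r \<le> CARD('n)" using dimeq dX r_def by simp
  have cBK: "card BK = CARD('n) - r" using dimeq dX r_def BK(4) by simp
  have cY: "card Y = r" using cX r_def by simp
  \<comment> \<open>extension of Y to a basis\<close>
  define B2 where "B2 = vec.extend_basis Y"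
  have B2: "Y \<subseteq> B2" "vec.independent B2" "vec.span B2 = UNIV"
    unfolding B2_def using Y(2) vec.extend_basis_superset vec.independent_extend_basis vec.span_extend_basis
    by auto
  have fB2: "finite B2" using B2(2) vec.finiteI_independent by auto
  have "card B2 = CARD('n)"
    using vec.dim_eq_card_independent[OF B2(2)] vec.dim_span[of B2] B2(3) by (simp add: card_cart_basis)
  then have cC2: "card (B2 - Y) = CARD('n) - r"
    using B2(1) fB2 cY by (simp add: card_Diff_subset finite_subset)
  obtain hY where hY: "bij_betw hY {0..<r} Y" using ex_bij_betw_nat_finite[OF fY] cY by auto
  obtain hK where hK: "bij_betw hK {0..<CARD('n) - r} BK" using ex_bij_betw_nat_finite[OF fBK] cBK by auto
  obtain hC where hC: "bij_betw hC {0..<CARD('n) - r} (B2 - Y)"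
    using ex_bij_betw_nat_finite[of "B2 - Y"] fB2 cC2 by auto
  define \<beta> where "\<beta> i = (if rk i < r then g (hY (rk i)) else hK (rk i - r))" for i :: 'n
  define \<beta>' where "\<beta>' i = (if rk i < r then hY (rk i) else hC (rk i - r))" for i :: 'n
  define Q0 :: "'a^'n^'n" where "Q0 = (\<chi> k i. \<beta> i $ k)"
  define P :: "'a^'n^'n" where "P = (\<chi> k i. \<beta>' i $ k)"
  have colQ: "(\<chi> k. Q0 $ k $ i) = \<beta> i" for i by (simp add: Q0_def vec_eq_iff)
  have colP: "(\<chi> k. P $ k $ i) = \<beta>' i" for i by (simp add: P_def vec_eq_iff)
  have XBK: "X \<union> BK \<subseteq> range \<beta>"
  proof safe
    fix x assume "x \<in> X"
    then obtain y where y: "y \<in> Y" "x = g y" unfolding X_def by auto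
    have "y \<in> hY ` {0..<r}" using hY y(1) by (simp add: bij_betw_def)
    then obtain k where k: "k < r" "y = hY k" by auto
    have "k < CARD('n)" using k(1) rn by linarith
    then obtain i :: 'n where "rk i = k" using rk_surj[of k, where 'n='n] by blast
    then have "\<beta> i = x" using k y by (simp add: \<beta>_def)
    then show "x \<in> range \<beta>" by (rule range_eqI[OF sym])
  next
    fix x assume "x \<in> BK"
    have "x \<in> hK ` {0..<CARD('n) - r}" using hK \<open>x \<in> BK\<close> by (simp add: bij_betw_def)
    then obtain k where k: "k < CARD('n) - r" "x = hK k" by auto
    then obtain i :: 'n where "rk i = k + r" using rk_surj[of "k + r", where 'n='n] k(1) by (meson less_diff_conv)
    then have "\<beta> i = x" using k by (simp add: \<beta>_def)
    then show "x \<in> range \<beta>" by (rule range_eqI[OF sym])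
  qed
  have "vec.span (X \<union> BK) = UNIV"
  proof -
    { fix v :: "'a^'n"
      obtain x y where "v = x + y" "x \<in> vec.span X" "y \<in> K" using sumU by blast
      moreover have "vec.span X \<subseteq> vec.span (X \<union> BK)" by (rule vec.span_mono) auto
      moreover have "K \<subseteq> vec.span (X \<union> BK)" using BK(3) vec.span_mono[of BK "X \<union> BK"] by auto
      ultimately have "v \<in> vec.span (X \<union> BK)" using vec.span_add by blast }
    then show ?thesis by auto
  qed
  then have dQ0: "det Q0 \<noteq> 0"
    by (rule det_nz_of_spanning) (use XBK colQ in auto)
  have B2r: "B2 \<subseteq> range \<beta>'"
  proof safe
    fix x assume x: "x \<in> B2"
    show "x \<in> range \<beta>'"
    proof (cases "x \<in> Y")
      case True
      have "x \<in> hY ` {0..<r}" using hY True by (simp add: bij_betw_def)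
      then obtain k where k: "k < r" "x = hY k" by auto
      have "k < CARD('n)" using k(1) rn by linarith
    then obtain i :: 'n where "rk i = k" using rk_surj[of k, where 'n='n] by blast
      then have "\<beta>' i = x" using k by (simp add: \<beta>'_def)
      then show ?thesis by (rule range_eqI[OF sym])
    next
      case False
      have "x \<in> hC ` {0..<CARD('n) - r}" using hC x False by (simp add: bij_betw_def)
      then obtain k where k: "k < CARD('n) - r" "x = hC k" by auto
      then obtain i :: 'n where "rk i = k + r" using rk_surj[of "k + r", where 'n='n] k(1) by (meson less_diff_conv)
      then have "\<beta>' i = x" using k by (simp add: \<beta>'_def)
      then show ?thesis by (rule range_eqI[OF sym])
    qed
  qed
  have dP: "det P \<noteq> 0"
    by (rule det_nz_of_spanning[OF B2(3)]) (use B2r colP in auto)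
  have MQ: "M ** Q0 = P ** EE r"
  proof -
    have "(M ** Q0) $ k $ i = (P ** EE r) $ k $ i" for k i
    proof -
      have "(M ** Q0) $ k $ i = (M *v \<beta> i) $ k"
        by (simp add: matrix_matrix_mult_def matrix_vector_mult_def Q0_def)
      moreover have "(P ** EE r) $ k $ i = (if rk i < r then \<beta>' i $ k else 0)"
        by (simp add: EE_dg mult_dg P_def)
      moreover have "M *v \<beta> i = (if rk i < r then \<beta>' i else 0)"
      proof (cases "rk i < r")
        case True
        then have "hY (rk i) \<in> Y" using hY unfolding bij_betw_def by auto
        then show ?thesis using True g by (simp add: \<beta>_def \<beta>'_def)
      next
        case False
        then have "rk i - r < CARD('n) - r" using rk_lt[of i] by simp
        then have "hK (rk i - r) \<in> K" using hK BK(1) unfolding bij_betw_def by auto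
        then show ?thesis using False by (simp add: \<beta>_def K_def)
      qed
      ultimately show ?thesis by simp
    qed
    then show ?thesis by (simp add: vec_eq_iff)
  qed
  obtain Q where Q: "Q0 ** Q = mat 1" "Q ** Q0 = mat 1"
    using dQ0 invertible_det_nz[of Q0] unfolding invertible_def by blast
  have "det Q0 * det Q = 1" using Q(1) det_mul[of Q0 Q] by simp
  then have dQ: "det Q \<noteq> 0" by auto
  have "M = M ** Q0 ** Q" using Q(1) by (simp add: matrix_mul_assoc[symmetric])
  also have "\<dots> = P ** EE r ** Q" using MQ by simp
  finally show ?thesis using dP dQ rn by blast
qed



lemma matrix_add_rdistrib2: "((B + C) ** A) = (B ** A) + (C ** A)"
  by (vector matrix_matrix_mult_def sum.distrib[symmetric] field_simps)

lemma dg_mult: "(dg h ** X) $ i $ j = h i * X $ i $ j"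
  by (simp add: matrix_matrix_mult_def dg_def if_distrib[of "\<lambda>x. x * y" for y] sum.delta cong: if_cong)

definition sleq :: "'a::comm_ring_1^'n::finite^'n \<Rightarrow> 'a^'n^'n \<Rightarrow> bool" where
  "sleq M N \<longleftrightarrow> (\<exists>P Q. det P = 1 \<and> det Q = 1 \<and> M = P ** N ** Q)"

definition Dc :: "'a::comm_ring_1 \<Rightarrow> 'a^'n::finite^'n" where
  "Dc c = dg (\<lambda>i. if rk i = 0 then c else 1)"

lemma inv_ex:
  fixes A :: "'a::field^'n::finite^'n"
  assumes "det A \<noteq> 0"
  shows "\<exists>B. A ** B = mat 1 \<and> B ** A = mat 1 \<and> det B = inverse (det A)"
proof -
  obtain B where B: "A ** B = mat 1" "B ** A = mat 1"
    using assms invertible_det_nz[of A] unfolding invertible_def by blast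
  then have "det A * det B = 1" using det_mul[of A B] by simp
  then have "det B = inverse (det A)" using assms by (simp add: field_simps)
  with B show ?thesis by blast
qed

definition KK :: "'a::comm_ring_1 \<Rightarrow> 'a^'n::finite^'n" where
  "KK k = dg (\<lambda>i. if rk i = CARD('n) - 1 then k else 1)"

lemma det_KK: "det (KK k :: 'a::comm_ring_1^'n::finite^'n) = k"
proof -
  obtain i0 :: 'n where i0: "rk i0 = CARD('n) - 1" using rk_surj[of "CARD('n) - 1", where 'n='n] by auto
  have "(\<lambda>i::'n. if rk i = CARD('n) - 1 then k else 1) = (\<lambda>i. if i = i0 then k else 1)"
  proof (rule ext)
    fix i :: 'n show "(if rk i = CARD('n) - 1 then k else 1) = (if i = i0 then k else 1)"
      using i0 rk_inj[of i i0] by auto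
  qed
  then show ?thesis by (simp add: KK_def det_dg prod.delta)
qed

lemma EE_KK: "r < CARD('n::finite) \<Longrightarrow> EE r ** KK k = (EE r :: 'a::comm_ring_1^'n^'n)"
  by (auto simp: vec_eq_iff KK_def mult_dg EE_nth)

lemma KK_EE: "r < CARD('n::finite) \<Longrightarrow> KK k ** EE r = (EE r :: 'a::comm_ring_1^'n^'n)"
  by (auto simp: vec_eq_iff KK_def dg_mult EE_nth)

lemma adjust:
  fixes P Q :: "'a::field^'n::finite^'n"
  assumes "det P \<noteq> 0" "det Q \<noteq> 0" "r < CARD('n)"
  shows "\<exists>P' Q'. det P' = 1 \<and> det Q' = 1 \<and> P ** EE r ** Q = P' ** EE r ** Q'"
proof -
  let ?P = "P ** KK (inverse (det P))" and ?Q = "KK (inverse (det Q)) ** Q"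
  have "P ** EE r ** Q = P ** (KK (inverse (det P)) ** EE r ** KK (inverse (det Q))) ** Q"
    using assms(3) by (simp add: KK_EE EE_KK)
  also have "\<dots> = ?P ** EE r ** ?Q" by (simp add: matrix_mul_assoc)
  finally show ?thesis using assms by (intro exI[of _ ?P] exI[of _ ?Q]) (simp add: det_mul det_KK)
qed

lemma det_Dc: "det (Dc c :: 'a::comm_ring_1^'n::finite^'n) = c"
proof -
  obtain i0 :: 'n where i0: "rk i0 = 0" using rk_surj[of 0, where 'n='n] by auto
  have "(\<lambda>i::'n. if rk i = 0 then c else 1) = (\<lambda>i. if i = i0 then c else 1)"
  proof (rule ext)
    fix i :: 'n show "(if rk i = 0 then c else 1) = (if i = i0 then c else 1)"
      using i0 rk_inj[of i i0] by auto
  qed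
  then show ?thesis by (simp add: Dc_def det_dg prod.delta)
qed

lemma EE_full: "EE (CARD('n::finite)) = (mat 1 :: 'a::comm_ring_1^'n^'n)"
  by (simp add: vec_eq_iff EE_nth mat_def rk_lt)

lemma EE_0: "EE 0 = (0 :: 'a::comm_ring_1^'n::finite^'n)"
  by (simp add: vec_eq_iff EE_nth)

lemma same_det_sleq:
  fixes M N :: "'a::field^'n::finite^'n"
  assumes "det M = det N" "det N \<noteq> 0"
  shows "sleq M N"
proof -
  obtain B where B: "N ** B = mat 1" "B ** N = mat 1" "det B = inverse (det N)" using inv_ex[OF assms(2)] by blast
  have "M = (M ** B) ** N ** mat 1" using B(2) by (simp add: matrix_mul_assoc[symmetric])
  moreover have "det (M ** B) = 1" using assms B(3) by (simp add: det_mul)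
  ultimately show ?thesis unfolding sleq_def by (metis det_I)
qed

lemma reps:
  fixes M :: "'a::field^'n::finite^'n"
  shows "(\<exists>r < CARD('n). sleq M (EE r)) \<or> (\<exists>c. c \<noteq> 0 \<and> sleq M (Dc c))"
proof -
  obtain P Q r where PQ: "det P \<noteq> 0" "det Q \<noteq> 0" "r \<le> CARD('n)" "M = P ** EE r ** Q"
    using normal_form[of M] by blast
  show ?thesis
  proof (cases "r < CARD('n)")
    case True
    then show ?thesis using adjust[OF PQ(1,2) True] PQ(4) unfolding sleq_def by blast
  next
    case False
    then have "r = CARD('n)" using PQ(3) by simp
    then have "M = P ** Q" using PQ(4) by (simp add: EE_full)
    then have "det M \<noteq> 0" using PQ by (simp add: det_mul)
    then have "sleq M (Dc (det M))" by (intro same_det_sleq) (simp_all add: det_Dc)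
    then show ?thesis using \<open>det M \<noteq> 0\<close> by blast
  qed
qed

lemma dec_sleq: "sleq M N \<Longrightarrow> dec N \<Longrightarrow> dec M"
proof -
  assume "sleq M N" "dec N"
  then obtain P Q S T where "det P = 1" "det Q = 1" "M = P ** N ** Q" "det S = 1" "det T = 1" "N = S + T"
    unfolding sleq_def dec_def by blast
  then show "dec M" unfolding dec_def
    by (intro exI[of _ "P ** S ** Q"] exI[of _ "P ** T ** Q"]) (simp add: matrix_add_ldistrib matrix_add_rdistrib2 det_mul)
qed

lemma decomp:
  fixes M :: "'a::field^'n::finite^'n"
  assumes n: "CARD('n) \<ge> 2" and M: "M \<noteq> 0"
  shows "dec M"
proof -
  obtain P Q r where PQ: "det P \<noteq> 0" "det Q \<noteq> 0" "r \<le> CARD('n)" "M = P ** EE r ** Q"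
    using normal_form[of M] by blast
  have r1: "1 \<le> r" using M PQ(4) by (cases r) (auto simp: EE_0)
  show ?thesis
  proof (cases "r < CARD('n)")
    case True
    obtain P' Q' where P': "det P' = 1" "det Q' = 1" "M = P' ** EE r ** Q'"
      using adjust[OF PQ(1,2) True] PQ(4) by blast
    obtain N A B where NAB: "det A \<noteq> 0" "det B \<noteq> 0" "N = A ** EE r ** (B :: 'a^'n^'n)" "dec N"
      using Db[OF n r1 True, where 'a='a] by blast
    obtain A' where A': "A' ** A = mat 1" "det A' = inverse (det A)" using inv_ex[OF NAB(1)] by blast
    obtain B' where B': "B ** B' = mat 1" "det B' = inverse (det B)" using inv_ex[OF NAB(2)] by blast
    have "A' ** N ** B' = (A' ** A) ** EE r ** (B ** B')" using NAB(3) by (simp add: matrix_mul_assoc)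
    then have "EE r = A' ** N ** B'" using A' B' by simp
    then have "M = P' ** (KK (det A) ** (A' ** N ** B') ** KK (det B)) ** Q'"
      using P'(3) True by (metis KK_EE EE_KK matrix_mul_assoc)
    also have "\<dots> = (P' ** KK (det A) ** A') ** N ** (B' ** KK (det B) ** Q')"
      by (simp add: matrix_mul_assoc)
    finally have "sleq M N" unfolding sleq_def using P' A' B' NAB(1,2)
      by (intro exI[of _ "P' ** KK (det A) ** A'"] exI[of _ "B' ** KK (det B) ** Q'"]) (simp add: det_mul det_KK)
    then show ?thesis using NAB(4) by (rule dec_sleq)
  next
    case False
    then have "M = P ** Q" using PQ by (simp add: EE_full)
    then have dM: "det M \<noteq> 0" using PQ by (simp add: det_mul)
    obtain N :: "'a^'n^'n" where N: "det N = det M" "dec N" using Da[OF n dM] by blast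
    have "sleq M N" using N dM by (intro same_det_sleq) simp_all
    then show ?thesis using N(2) by (rule dec_sleq)
  qed
qed



lemma det_uminus: "det (- M :: 'a::comm_ring_1^'n::finite^'n) = (-1) ^ CARD('n) * det M"
proof -
  have "- M = dg (\<lambda>_. -1) ** M" by (simp add: vec_eq_iff dg_mult)
  then show ?thesis by (simp add: det_mul det_dg)
qed

lemma CHAR2: "CHAR('a::field) = 2 \<longleftrightarrow> (2::'a) = 0"
proof
  assume "CHAR('a) = 2"
  then show "(2::'a) = 0" using of_nat_eq_0_iff_char_dvd[of 2, where 'a='a] by simp
next
  assume "(2::'a) = 0"
  then have d: "CHAR('a) dvd 2" using of_nat_eq_0_iff_char_dvd[of 2, where 'a='a] by simp
  have "CHAR('a) \<le> 2" using d by (rule dvd_imp_le) simp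
  moreover have "CHAR('a) \<noteq> 0" using d by (intro notI) simp
  moreover have "CHAR('a) \<noteq> 1" using CHAR_not_1[where 'a='a] by simp
  ultimately show "CHAR('a) = 2" by linarith
qed

lemma SL_sym:
  "(uminus ` (SL :: ('a::field^'n::finite^'n) set) = SL) \<longleftrightarrow> (even CARD('n) \<or> CHAR('a) = 2)"
proof -
  have "(uminus ` (SL :: ('a^'n^'n) set) = SL) \<longleftrightarrow> (-1::'a) ^ CARD('n) = 1"
  proof
    assume h: "uminus ` (SL :: ('a^'n^'n) set) = SL"
    have "- mat 1 \<in> uminus ` (SL :: ('a^'n^'n) set)" by (rule imageI) (simp add: SL_def)
    then have "- mat 1 \<in> (SL :: ('a^'n^'n) set)" using h by simp
    then have "det (- mat 1 :: 'a^'n^'n) = 1" by (simp add: SL_def)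
    then show "(-1::'a) ^ CARD('n) = 1" by (simp add: det_uminus)
  next
    assume h: "(-1::'a) ^ CARD('n) = 1"
    have "det (- M) = det M" for M :: "'a^'n^'n" by (simp add: det_uminus h)
    then show "uminus ` (SL :: ('a^'n^'n) set) = SL"
      unfolding SL_def by (auto simp: image_iff intro: exI[of _ "- x" for x]) (metis minus_minus)
  qed
  also have "\<dots> \<longleftrightarrow> even CARD('n) \<or> (2::'a) = 0"
  proof (cases "even CARD('n)")
    case True then show ?thesis by simp
  next
    case False
    then have "(-1::'a) ^ CARD('n) = -1" by simp
    moreover have "(-1::'a) = 1 \<longleftrightarrow> (2::'a) = 0"
      by (metis add_eq_0_iff one_add_one)
    ultimately show ?thesis using False by simp
  qed
  finally show ?thesis by (simp add: CHAR2)
qed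

lemma relpow2: "(A, C) \<in> R \<Longrightarrow> (C, B) \<in> R \<Longrightarrow> (A, B) \<in> R ^^ 2"
  using relcompI[of A C R B R] by (simp add: numeral_2_eq_2)

lemma two_step:
  fixes A B :: "'a::field^'n::finite^'n"
  assumes n: "CARD('n) \<ge> 2" and AB: "A \<noteq> B"
  shows "(A, B) \<in> sud_edges ^^ 2"
proof -
  have "B - A \<noteq> 0" using AB by simp
  then obtain S T where ST: "det S = 1" "det T = 1" "B - A = S + T"
    using decomp[OF n] unfolding dec_def by blast
  have "(A, A + S) \<in> sud_edges" using ST by (simp add: sud_edges_def)
  moreover have "B - (A + S) = T" using ST(3) by (simp add: algebra_simps)
  then have "(A + S, B) \<in> sud_edges" using ST by (simp add: sud_edges_def)
  ultimately show ?thesis by (rule relpow2)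
qed

lemma strongly_connected:
  assumes n: "CARD('n::finite) \<ge> 2"
  shows "sud_strongly_connected TYPE('a::{finite,field}) TYPE('n)"
  unfolding sud_strongly_connected_def
proof (intro allI)
  fix A B :: "'a^'n^'n"
  show "(A, B) \<in> sud_edges\<^sup>*"
  proof (cases "A = B")
    case True then show ?thesis by simp
  next
    case False
    then show ?thesis using two_step[OF n False] relpow_imp_rtrancl by blast
  qed
qed

lemma dist_le2:
  fixes A B :: "'a::field^'n::finite^'n"
  assumes n: "CARD('n) \<ge> 2"
  shows "sud_dist A B \<le> 2"
proof (cases "A = B")
  case True
  then have "(A, B) \<in> sud_edges ^^ 0" by simp
  then show ?thesis unfolding sud_dist_def by (metis Least_le le0 le_trans)
next
  case False
  show ?thesis unfolding sud_dist_def by (rule Least_le[where P="\<lambda>k. (A, B) \<in> sud_edges ^^ k", OF two_step[OF n False]])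
qed

lemma diam:
  assumes n: "CARD('n::finite) \<ge> 2"
  shows "sud_diameter TYPE('a::{finite,field}) TYPE('n) = 2"
proof -
  let ?S = "{sud_dist (A :: 'a^'n^'n) B | A B. True}"
  have fin: "finite ?S"
  proof -
    have "?S = (\<lambda>(A, B). sud_dist (A :: 'a^'n^'n) B) ` UNIV" by auto
    then show ?thesis by simp
  qed
  obtain i0 :: 'n where i0: "rk i0 = 0" using rk_surj[of 0, where 'n='n] n by auto
  obtain i1 :: 'n where i1: "rk i1 = 1" using rk_surj[of 1, where 'n='n] n by auto
  let ?B = "EE 1 :: 'a^'n^'n"
  have B0: "?B \<noteq> 0" using i0 by (auto simp: vec_eq_iff EE_nth intro!: exI[of _ i0])
  have dB: "det ?B = 0"
    unfolding EE_dg det_dg by (rule prod_zero) (simp, rule bexI[of _ i1], use i1 in auto)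
  have "sud_dist 0 ?B = 2"
    unfolding sud_dist_def
  proof (rule Least_equality)
    show "(0, ?B) \<in> sud_edges ^^ 2" using two_step[OF n] B0 by metis
  next
    fix k assume k: "(0, ?B) \<in> sud_edges ^^ k"
    show "2 \<le> k"
    proof (rule ccontr)
      assume "\<not> 2 \<le> k"
      then have "k = 0 \<or> k = 1" by auto
      then show False
      proof
        assume "k = 0" then show False using k B0 by simp
      next
        assume "k = 1" then show False using k dB by (simp add: sud_edges_def)
      qed
    qed
  qed
  then have "2 \<in> ?S" by (metis (mono_tags, lifting) CollectI)
  moreover have "\<And>y. y \<in> ?S \<Longrightarrow> y \<le> 2" using dist_le2[OF n] by auto
  ultimately show ?thesis unfolding sud_diameter_def using fin by (intro Max_eqI) auto
qed



lemma sleq_inv: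
  fixes M N :: "'a::field^'n::finite^'n"
  assumes "sleq M N"
  shows "\<exists>P Q P' Q'. det P = 1 \<and> det Q = 1 \<and> M = P ** N ** Q \<and> P' ** P = mat 1 \<and> Q ** Q' = mat 1"
proof -
  obtain P Q where PQ: "det P = 1" "det Q = 1" "M = P ** N ** Q" using assms unfolding sleq_def by blast
  obtain P' where "P' ** P = mat 1" using inv_ex[of P] PQ by auto
  moreover obtain Q' where "Q ** Q' = mat 1" using inv_ex[of Q] PQ by auto
  ultimately show ?thesis using PQ by blast
qed

lemma sleq_zero:
  fixes M N :: "'a::field^'n::finite^'n"
  assumes "sleq M N"
  shows "M = 0 \<longleftrightarrow> N = 0"
proof -
  obtain P Q P' Q' where H: "M = P ** N ** Q" "P' ** P = mat 1" "Q ** Q' = mat 1"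
    using sleq_inv[OF assms] by blast
  have "P' ** M ** Q' = (P' ** P) ** N ** (Q ** Q')" using H(1) by (simp add: matrix_mul_assoc)
  then have "N = P' ** M ** Q'" using H by simp
  then show ?thesis using H by auto
qed

lemma sleq_det: "sleq M N \<Longrightarrow> det M = det N"
  unfolding sleq_def by (auto simp: det_mul)

definition WW :: "(complex^('a::{finite,field}^'n::finite^'n)^('a^'n^'n)) set" where
  "WW = {X. \<forall>A B A' B'. sleq (B - A) (B' - A') \<longrightarrow> X$A$B = X$A'$B'}"

lemma W_one: "mat 1 \<in> WW"
  unfolding WW_def
proof (intro CollectI allI impI)
  fix A B A' B' :: "'a::{finite,field}^'n::finite^'n"
  assume "sleq (B - A) (B' - A')"
  then have "(B - A = 0) = (B' - A' = 0)" by (rule sleq_zero)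
  then have "(A = B) = (A' = B')" by auto
  then show "(mat 1 :: complex^('a^'n^'n)^('a^'n^'n)) $ A $ B = mat 1 $ A' $ B'" by (simp add: mat_def)
qed

lemma W_adj: "sud_adj \<in> WW"
  unfolding WW_def
proof (intro CollectI allI impI)
  fix A B A' B' :: "'a::{finite,field}^'n::finite^'n"
  assume "sleq (B - A) (B' - A')"
  then have "det (B - A) = det (B' - A')" by (rule sleq_det)
  then show "(sud_adj :: complex^('a^'n^'n)^('a^'n^'n)) $ A $ B = sud_adj $ A' $ B'"
    by (simp add: sud_adj_def sud_edges_def)
qed

lemma matrix_diff_ldistrib2: "A ** (B - C) = A ** B - A ** (C :: 'a::comm_ring_1^'n::finite^'n)"
  by (metis add_diff_cancel diff_add_cancel matrix_add_ldistrib)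

lemma matrix_diff_rdistrib2: "(B - C) ** A = B ** A - C ** (A :: 'a::comm_ring_1^'n::finite^'n)"
  by (metis add_diff_cancel diff_add_cancel matrix_add_rdistrib2)

lemma W_mult:
  fixes X :: "complex^('a::{finite,field}^'n::finite^'n)^('a^'n^'n)"
  assumes X: "X \<in> WW"
  shows "sud_adj ** X \<in> WW"
  unfolding WW_def
proof (intro CollectI allI impI)
  fix A B A' B' :: "'a^'n^'n"
  assume "sleq (B - A) (B' - A')"
  then obtain P Q P' Q' where H: "det P = 1" "det Q = 1" "B - A = P ** (B' - A') ** Q"
    "P' ** P = mat 1" "Q ** Q' = mat 1"
    using sleq_inv by blast
  have P'': "P ** P' = mat 1" using H(4) matrix_left_right_inverse by blast
  have Q'': "Q' ** Q = mat 1" using H(5) matrix_left_right_inverse by blast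
  define \<phi> where "\<phi> C = A + P ** (C - A') ** Q" for C :: "'a^'n^'n"
  define \<psi> where "\<psi> C = A' + P' ** (C - A) ** Q'" for C :: "'a^'n^'n"
  have bij: "bij_betw \<phi> UNIV UNIV"
  proof (rule bij_betw_byWitness[where f'=\<psi>])
    have "P' ** (P ** Y ** Q) ** Q' = (P' ** P) ** Y ** (Q ** Q')" for Y :: "'a^'n^'n"
      by (simp add: matrix_mul_assoc)
    then show "\<forall>a\<in>UNIV. \<psi> (\<phi> a) = a"
      using H(4,5) by (simp add: \<phi>_def \<psi>_def)
    have "P ** (P' ** Y ** Q') ** Q = (P ** P') ** Y ** (Q' ** Q)" for Y :: "'a^'n^'n"
      by (simp add: matrix_mul_assoc)
    then show "\<forall>a\<in>UNIV. \<phi> (\<psi> a) = a"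
      using P'' Q'' by (simp add: \<phi>_def \<psi>_def)
  qed auto
  let ?F = "\<lambda>C. (sud_adj :: complex^('a^'n^'n)^('a^'n^'n)) $ A $ C * X $ C $ B"
  have "(sud_adj ** X) $ A $ B = (\<Sum>C\<in>UNIV. ?F C)"
    by (simp add: matrix_matrix_mult_def)
  also have "\<dots> = (\<Sum>C'\<in>UNIV. ?F (\<phi> C'))"
    by (rule sum.reindex_bij_betw[OF bij, symmetric])
  also have "\<dots> = (\<Sum>C'\<in>UNIV. sud_adj $ A' $ C' * X $ C' $ B')"
  proof (rule sum.cong[OF refl])
    fix C' :: "'a^'n^'n"
    have d: "det (\<phi> C' - A) = det (C' - A')" by (simp add: \<phi>_def det_mul H)
    have "B - \<phi> C' = P ** (B' - A') ** Q - P ** (C' - A') ** Q"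
      using H(3) by (simp add: \<phi>_def algebra_simps)
    also have "\<dots> = P ** (B' - C') ** Q"
      by (simp add: matrix_diff_ldistrib2 matrix_diff_rdistrib2 algebra_simps)
    finally have "sleq (B - \<phi> C') (B' - C')" unfolding sleq_def using H by blast
    then have "X $ \<phi> C' $ B = X $ C' $ B'" using X unfolding WW_def by blast
    then show "?F (\<phi> C') = sud_adj $ A' $ C' * X $ C' $ B'"
      using d by (simp add: sud_adj_def sud_edges_def)
  qed
  also have "\<dots> = (sud_adj ** X) $ A' $ B'"
    by (simp add: matrix_matrix_mult_def)
  finally show "(sud_adj ** X) $ A $ B = (sud_adj ** X) $ A' $ B'" .
qed



definition Phi :: "complex^('a::{finite,field}^'n::finite^'n)^('a^'n^'n) \<Rightarrow> complex^('n + 'a)" where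
  "Phi X = (\<chi> j. case j of Inl i \<Rightarrow> X $ 0 $ EE (rk i) | Inr c \<Rightarrow> if c = 0 then 0 else X $ 0 $ Dc c)"

lemma Phi_inj:
  fixes X Y :: "complex^('a::{finite,field}^'n::finite^'n)^('a^'n^'n)"
  assumes X: "X \<in> WW" and Y: "Y \<in> WW" and e: "Phi X = Phi Y"
  shows "X = Y"
proof -
  have "X $ A $ B = Y $ A $ B" for A B :: "'a^'n^'n"
  proof -
    have "(\<exists>r < CARD('n). sleq (B - A) (EE r)) \<or> (\<exists>c. c \<noteq> 0 \<and> sleq (B - A) (Dc c))"
      by (rule reps)
    then show ?thesis
    proof
      assume "\<exists>r < CARD('n). sleq (B - A) (EE r)"
      then obtain r where r: "r < CARD('n)" "sleq (B - A) (EE r - 0)" by auto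
      obtain i :: 'n where i: "rk i = r" using rk_surj[OF r(1)] by blast
      have "X $ A $ B = X $ 0 $ EE r" "Y $ A $ B = Y $ 0 $ EE r"
        using X Y r(2) unfolding WW_def by blast+
      moreover have "Phi X $ Inl i = Phi Y $ Inl i" using e by simp
      ultimately show ?thesis using i by (simp add: Phi_def)
    next
      assume "\<exists>c. c \<noteq> 0 \<and> sleq (B - A) (Dc c)"
      then obtain c where c: "c \<noteq> 0" "sleq (B - A) (Dc c - 0)" by auto
      have "X $ A $ B = X $ 0 $ Dc c" "Y $ A $ B = Y $ 0 $ Dc c"
        using X Y c(2) unfolding WW_def by blast+
      moreover have "Phi X $ Inr c = Phi Y $ Inr c" using e by simp
      ultimately show ?thesis using c by (simp add: Phi_def)
    qed
  qed
  then show ?thesis by (simp add: vec_eq_iff)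
qed

definition lc :: "(nat \<Rightarrow> complex) \<Rightarrow> nat set \<Rightarrow> (nat \<Rightarrow> complex^'v::finite^'v) \<Rightarrow> complex^'v^'v" where
  "lc a F X = (\<chi> A B. \<Sum>k\<in>F. a k * X k $ A $ B)"

lemma W_lc:
  assumes "\<And>k. k \<in> F \<Longrightarrow> X k \<in> WW"
  shows "lc a F X \<in> WW"
  using assms unfolding WW_def lc_def by (auto intro: sum.cong)

lemma Phi_lc: "Phi (lc a F X) = (\<Sum>k\<in>F. a k *s Phi (X k))"
  by (auto simp: vec_eq_iff Phi_def lc_def sum_distrib_left split: sum.splits)

lemma Phi_0: "Phi 0 = 0"
  by (auto simp: vec_eq_iff Phi_def split: sum.splits)

lemma zero_W: "0 \<in> WW"
  by (simp add: WW_def)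

definition pw :: "nat \<Rightarrow> complex^('a::{finite,field}^'n::finite^'n)^('a^'n^'n)" where
  "pw k = ((\<lambda>Y. sud_adj ** Y) ^^ k) (mat 1)"

lemma pw_Suc: "pw (Suc k) = sud_adj ** pw k"
  by (simp add: pw_def)

lemma pw_0: "pw 0 = mat 1"
  by (simp add: pw_def)

lemma pw_W: "pw k \<in> WW"
  by (induction k) (simp_all add: pw_0 pw_Suc W_one W_mult)

lemma dimU: "vec.dim {v :: complex^('n::finite + 'a::{finite,field}). \<forall>j. j \<notin> - {Inr 0} \<longrightarrow> v $ j = 0}
   = CARD('n) + CARD('a) - 1"
proof -
  have "vec.dim {v :: complex^('n + 'a). \<forall>j. j \<notin> - {Inr 0} \<longrightarrow> v $ j = 0} = card (- {Inr 0} :: ('n + 'a) set)"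
    by (rule dim_substandard_cart)
  moreover have "- {Inr 0} = (UNIV :: ('n + 'a) set) - {Inr 0}" by auto
  ultimately show ?thesis by (simp add: card_Diff_singleton)
qed

lemma annih:
  "\<exists>a. (\<exists>k\<le>CARD('n) + CARD('a) - 1. a k \<noteq> 0) \<and>
     lc a {..CARD('n) + CARD('a) - 1} (pw :: nat \<Rightarrow> complex^('a::{finite,field}^'n::finite^'n)^('a^'n^'n)) = 0"
proof -
  let ?m = "CARD('n) + CARD('a) - 1"
  let ?pw = "pw :: nat \<Rightarrow> complex^('a^'n^'n)^('a^'n^'n)"
  show ?thesis
  proof (cases "inj_on ?pw {..?m}")
    case False
    then obtain i j where ij: "i \<le> ?m" "j \<le> ?m" "i \<noteq> j" "?pw i = ?pw j"
      unfolding inj_on_def by auto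
    define a where "a k = (if k = i then (1::complex) else if k = j then -1 else 0)" for k :: nat
    have "lc a {..?m} ?pw = 0"
    proof -
      have "(\<Sum>k\<in>{..?m}. a k * ?pw k $ A $ B) = 0" for A B
      proof -
        have "(\<Sum>k\<in>{..?m}. a k * ?pw k $ A $ B)
            = (\<Sum>k\<in>{..?m}. (if k = i then ?pw i $ A $ B else 0) - (if k = j then ?pw j $ A $ B else 0))"
          by (rule sum.cong) (use ij in \<open>auto simp: a_def\<close>)
        also have "\<dots> = 0" using ij by (simp add: sum_subtractf)
        finally show ?thesis .
      qed
      then show ?thesis by (simp add: lc_def vec_eq_iff)
    qed
    moreover have "a i \<noteq> 0" by (simp add: a_def)
    ultimately show ?thesis using ij by blast
  next
    case True
    let ?w = "\<lambda>k. Phi (?pw k)"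
    let ?S = "?w ` {..?m}"
    let ?U = "{v :: complex^('n + 'a). \<forall>j. j \<notin> - {Inr 0} \<longrightarrow> v $ j = 0}"
    have injw: "inj_on ?w {..?m}"
      using True Phi_inj pw_W unfolding inj_on_def by metis
    have cS: "card ?S = Suc ?m" using card_image[OF injw] by simp
    have SU: "?S \<subseteq> ?U" by (auto simp: Phi_def)
    have "\<not> vec.independent ?S"
    proof
      assume "vec.independent ?S"
      then have "card ?S \<le> vec.dim ?U" using vec.independent_card_le_dim[OF SU] by blast
      then show False using cS dimU[where 'n='n and 'a='a] by simp
    qed
    then obtain u where u: "\<exists>v\<in>?S. u v \<noteq> 0" "(\<Sum>v\<in>?S. u v *s v) = 0"
      using vec.dependent_finite[of ?S] by auto
    define a where "a k = u (?w k)" for k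
    have "Phi (lc a {..?m} ?pw) = (\<Sum>k\<in>{..?m}. a k *s ?w k)" by (rule Phi_lc)
    also have "\<dots> = (\<Sum>v\<in>?S. u v *s v)"
      unfolding a_def using sum.reindex[OF injw, of "\<lambda>v. u v *s v"] by (simp add: o_def)
    also have "\<dots> = 0" by (rule u(2))
    finally have "Phi (lc a {..?m} ?pw) = Phi 0" by (simp add: Phi_0)
    then have "lc a {..?m} ?pw = 0"
      by (rule Phi_inj[OF W_lc[OF pw_W] zero_W])
    moreover obtain k where "k \<le> ?m" "a k \<noteq> 0" using u(1) by (auto simp: a_def)
    ultimately show ?thesis by blast
  qed
qed



lemma mv_scale: "(M :: complex^'v::finite^'v) *v (c *s x) = c *s (M *v x)"
  by (simp add: vec_eq_iff matrix_vector_mult_def sum_distrib_left algebra_simps)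

lemma pw_eig:
  assumes "sud_adj *v v = c *s v"
  shows "(pw k :: complex^('a::{finite,field}^'n::finite^'n)^('a^'n^'n)) *v v = c ^ k *s v"
proof (induction k)
  case 0 then show ?case by (simp add: pw_0)
next
  case (Suc k)
  have "pw (Suc k) *v v = sud_adj *v (pw k *v v)" by (simp add: pw_Suc matrix_vector_mul_assoc)
  also have "\<dots> = c ^ Suc k *s v" using Suc assms by (simp add: mv_scale)
  finally show ?case .
qed

lemma eig_root:
  fixes v :: "complex^('a::{finite,field}^'n::finite^'n)"
  assumes v: "v \<noteq> 0" "sud_adj *v v = c *s v"
    and Z: "lc a F (pw :: nat \<Rightarrow> complex^('a^'n^'n)^('a^'n^'n)) = 0" and fF: "finite F"
  shows "(\<Sum>k\<in>F. a k * c ^ k) = 0"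
proof -
  obtain A where A: "v $ A \<noteq> 0" using v(1) by (auto simp: vec_eq_iff)
  have "0 = (lc a F pw *v v) $ A" using Z by simp
  also have "\<dots> = (\<Sum>B\<in>UNIV. (\<Sum>k\<in>F. a k * pw k $ A $ B) * v $ B)"
    by (simp add: lc_def matrix_vector_mult_def)
  also have "\<dots> = (\<Sum>k\<in>F. a k * (pw k *v v) $ A)"
    by (simp add: matrix_vector_mult_def sum_distrib_left sum_distrib_right mult.assoc sum.swap[of _ UNIV])
  also have "\<dots> = (\<Sum>k\<in>F. a k * c ^ k) * v $ A"
    using pw_eig[OF v(2)] by (simp add: sum_distrib_right mult.assoc)
  finally show ?thesis using A by simp
qed

lemma eig_bound:
  "card {c. is_eigenvalue (sud_adj :: complex ^ ('a::{finite,field}^'n::finite^'n) ^ ('a^'n^'n)) c}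
           \<le> CARD('n) + CARD('a) - 1"
proof -
  let ?m = "CARD('n) + CARD('a) - 1"
  obtain a where a: "\<exists>k\<le>?m. a k \<noteq> 0"
    "lc a {..?m} (pw :: nat \<Rightarrow> complex^('a^'n^'n)^('a^'n^'n)) = 0"
    using annih[where 'n='n and 'a='a] by blast
  define p where "p = (\<Sum>k\<in>{..?m}. monom (a k) k)"
  have cp: "coeff p i = (if i \<le> ?m then a i else 0)" for i
    by (simp add: p_def coeff_sum)
  have p0: "p \<noteq> 0" using a(1) cp by (metis coeff_0)
  have dp: "degree p \<le> ?m" by (rule degree_le) (simp add: cp)
  have sub: "{c. is_eigenvalue (sud_adj :: complex ^ ('a^'n^'n) ^ ('a^'n^'n)) c} \<subseteq> {x. poly p x = 0}"
  proof
    fix c assume "c \<in> {c. is_eigenvalue (sud_adj :: complex ^ ('a^'n^'n) ^ ('a^'n^'n)) c}"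
    then obtain v :: "complex^('a^'n^'n)" where v: "v \<noteq> 0" "sud_adj *v v = c *s v"
      by (auto simp: is_eigenvalue_def)
    have "(\<Sum>k\<in>{..?m}. a k * c ^ k) = 0" by (rule eig_root[OF v a(2)]) simp
    then show "c \<in> {x. poly p x = 0}" by (simp add: p_def poly_sum poly_monom)
  qed
  have "card {c. is_eigenvalue (sud_adj :: complex ^ ('a^'n^'n) ^ ('a^'n^'n)) c} \<le> card {x. poly p x = 0}"
    by (rule card_mono[OF poly_roots_finite[OF p0] sub])
  also have "\<dots> \<le> degree p" by (rule card_poly_roots_bound[OF p0])
  finally show ?thesis using dp by simp
qed

theorem corollary3p11:
  assumes "CARD('n::finite) \<ge> 2"
  shows "sud_strongly_connected TYPE('a::{finite,field}) TYPE('n)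
       \<and> sud_diameter TYPE('a) TYPE('n) = 2
       \<and> ((uminus ` (SL :: ('a^'n^'n) set) = SL) \<longleftrightarrow> (even CARD('n) \<or> CHAR('a) = 2))
       \<and> card {c. is_eigenvalue (sud_adj :: complex ^ ('a^'n^'n) ^ ('a^'n^'n)) c}
           \<le> CARD('n) + CARD('a) - 1"
  using strongly_connected[OF assms] diam[OF assms] SL_sym eig_bound by blast

end
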